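(* In the Setting, it cannot hold simultaneously that $r=\sqrt{K-\lambda_1}$, $r+s=\sqrt{K^2-\lambda_2V}$, $s=-\sqrt{K^2-\lambda_2V}$, $f_2=0$, $f_1=f-c+1$, $g_1=c-1$ and $g_2=g-c$.
   Context: Setting: $\Gamma$ is a primitive strongly regular graph with parameters $(v,k,\lambda,\mu)$ (a $k$-regular graph on $v$ vertices, any two adjacent vertices having $\lambda$ and any two distinct non-adjacent vertices having $\mu$ common neighbours; primitive means $\Gamma$ and its complement are connected), with spectrum $k^1, r^f, s^g$ where $k>r>s$ and exponents are multiplicities. $C$ is a coclique in $\Gamma$ of size $c=\frac{vs}{s-k}$. A $K$-regular graph on $V$ vertices, neither complete nor edgeless, is a divisible design graph with parameters $(V,K,\lambda_1,\lambda_2;m,n)$ if its vertex set can be partitioned into $m$ canonical classes of size $n$ such that two distinct vertices in the same class have exactly $\lambda_1$ common neighbours and two vertices in different classes have exactly $\lambda_2$ common neighbours; it is proper unless $m=1$, $n=1$ or $\lambda_1=\lambda_2$. It is assumed that the subgraph $\Delta$ induced on $V(\Gamma)\setminus C$ is a proper divisible design graph with parameters $(V,K,\lambda_1,\lambda_2;m,n)$. Let $A$ be the adjacency matrix of $\Delta$, $W$ the space of vectors constant on each canonical class and $\mathbf{1}$ the all-ones vector. It is known that $A$ acts on $W^\perp$ with eigenvalues $\pm\sqrt{K-\lambda_1}$, whose multiplicities are denoted $f_1$ (for $+$) and $f_2$ (for $-$), with $f_1+f_2=m(n-1)$, and on $W\cap\mathbf{1}^\perp$ with eigenvalues $\pm\sqrt{K^2-\lambda_2V}$,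 with multiplicities $g_1$ (for $+$) and $g_2$ (for $-$), $g_1+g_2=m-1$. It is also known that the spectrum of $\Delta$ is $(k+s)^1, r^{f-c+1}, (r+s)^{c-1}, s^{g-c}$, with $c<g$. *)

theory Defs
  imports "HOL-Analysis.Analysis" "HOL-Library.Multiset" "HOL-Library.Disjoint_Sets"
begin

definition is_graph :: "('a \<Rightarrow> 'a \<Rightarrow> bool) \<Rightarrow> bool" where
  "is_graph E \<longleftrightarrow> (\<forall>x y. E x y \<longrightarrow> E y x) \<and> (\<forall>x. \<not> E x x)"

definition common_nbrs :: "('a \<Rightarrow> 'a \<Rightarrow> bool) \<Rightarrow> 'a set \<Rightarrow> 'a \<Rightarrow> 'a \<Rightarrow> nat" where
  "common_nbrs E X x y = card {z \<in> X. E x z \<and> E y z}"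

definition srg :: "('a::finite \<Rightarrow> 'a \<Rightarrow> bool) \<Rightarrow> nat \<Rightarrow> nat \<Rightarrow> nat \<Rightarrow> nat \<Rightarrow> bool" where
  "srg E v k lam mu \<longleftrightarrow> is_graph E \<and> CARD('a) = v
     \<and> (\<forall>x. card {y. E x y} = k)
     \<and> (\<forall>x y. x \<noteq> y \<and> E x y \<longrightarrow> common_nbrs E UNIV x y = lam)
     \<and> (\<forall>x y. x \<noteq> y \<and> \<not> E x y \<longrightarrow> common_nbrs E UNIV x y = mu)"

definition primitive :: "('a \<Rightarrow> 'a \<Rightarrow> bool) \<Rightarrow> bool" where
  "primitive E \<longleftrightarrow> (\<forall>x y. E\<^sup>*\<^sup>* x y) \<and> (\<forall>x y. (\<lambda>a b. a \<noteq> b \<and> \<not> E a b)\<^sup>*\<^sup>* x y)"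

definition coclique :: "('a \<Rightarrow> 'a \<Rightarrow> bool) \<Rightarrow> 'a set \<Rightarrow> bool" where
  "coclique E C \<longleftrightarrow> (\<forall>x\<in>C. \<forall>y\<in>C. \<not> E x y)"

definition adj_mat :: "('a::finite \<Rightarrow> 'a \<Rightarrow> bool) \<Rightarrow> 'a set \<Rightarrow> real^'a^'a" where
  "adj_mat E X = (\<chi> i j. if i \<in> X \<and> j \<in> X \<and> E i j then 1 else 0)"

text \<open>Vectors indexed by the vertices of X (i.e. supported on X).\<close>
definition supp_on :: "'a::finite set \<Rightarrow> (real^'a) set" where
  "supp_on X = {x. \<forall>i. i \<notin> X \<longrightarrow> x $ i = 0}"

definition ones_on :: "'a::finite set \<Rightarrow> real^'a" where
  "ones_on X = (\<chi> i. if i \<in> X then 1 else 0)"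

definition orth_compl :: "'a::finite set \<Rightarrow> (real^'a) set \<Rightarrow> (real^'a) set" where
  "orth_compl X S = {x \<in> supp_on X. \<forall>w\<in>S. inner x w = 0}"

definition class_const :: "'a::finite set \<Rightarrow> 'a set set \<Rightarrow> (real^'a) set" where
  "class_const X P = {x \<in> supp_on X. \<forall>Q\<in>P. \<forall>i\<in>Q. \<forall>j\<in>Q. x $ i = x $ j}"

definition eigensp :: "(real^'a::finite) set \<Rightarrow> real^'a^'a \<Rightarrow> real \<Rightarrow> (real^'a) set" where
  "eigensp S M \<theta> = {x \<in> S. M *v x = \<theta> *\<^sub>R x}"

definition spectrum_on :: "(real^'a::finite) set \<Rightarrow> real^'a^'a \<Rightarrow> real multiset \<Rightarrow> bool" where
  "spectrum_on S M Ms \<longleftrightarrow> (\<forall>\<theta>. dim (eigensp S M \<theta>) = count Ms \<theta>)"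

definition ddg :: "('a \<Rightarrow> 'a \<Rightarrow> bool) \<Rightarrow> 'a set \<Rightarrow> 'a set set
    \<Rightarrow> nat \<Rightarrow> nat \<Rightarrow> nat \<Rightarrow> nat \<Rightarrow> nat \<Rightarrow> nat \<Rightarrow> bool" where
  "ddg E X P VV K l1 l2 m n \<longleftrightarrow>
     card X = VV
     \<and> (\<forall>x\<in>X. card {y \<in> X. E x y} = K)
     \<and> \<not> (\<forall>x\<in>X. \<forall>y\<in>X. x \<noteq> y \<longrightarrow> E x y)
     \<and> \<not> (\<forall>x\<in>X. \<forall>y\<in>X. \<not> E x y)
     \<and> partition_on X P \<and> card P = m \<and> (\<forall>Q\<in>P. card Q = n)
     \<and> (\<forall>Q\<in>P. \<forall>x\<in>Q. \<forall>y\<in>Q. x \<noteq> y \<longrightarrow> common_nbrs E X x y = l1)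
     \<and> (\<forall>Q\<in>P. \<forall>Q'\<in>P. Q \<noteq> Q' \<longrightarrow> (\<forall>x\<in>Q. \<forall>y\<in>Q'. common_nbrs E X x y = l2))"

definition proper_ddg :: "('a \<Rightarrow> 'a \<Rightarrow> bool) \<Rightarrow> 'a set \<Rightarrow> 'a set set
    \<Rightarrow> nat \<Rightarrow> nat \<Rightarrow> nat \<Rightarrow> nat \<Rightarrow> nat \<Rightarrow> nat \<Rightarrow> bool" where
  "proper_ddg E X P VV K l1 l2 m n \<longleftrightarrow>
     ddg E X P VV K l1 l2 m n \<and> m \<noteq> 1 \<and> n \<noteq> 1 \<and> l1 \<noteq> l2"

end

theory Submission
  imports Defs
begin

lemma subspace_supp_on: "subspace (supp_on X)"
  unfolding subspace_def supp_on_def by auto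

lemma subspace_class_const: "subspace (class_const X P)"
proof (unfold subspace_def, intro conjI ballI allI)
  show "0 \<in> class_const X P" by (simp add: class_const_def supp_on_def)
next
  fix x y assume x: "x \<in> class_const X P" and y: "y \<in> class_const X P"
  show "x + y \<in> class_const X P"
    unfolding class_const_def supp_on_def mem_Collect_eq
  proof (intro conjI allI ballI impI)
    fix i assume "i \<notin> X" then show "(x+y)$i = 0" using x y by (simp add: class_const_def supp_on_def)
  next
    fix Q i j assume "Q \<in> P" "i \<in> Q" "j \<in> Q"
    then have "x$i = x$j" "y$i = y$j" using x y unfolding class_const_def by blast+
    then show "(x+y)$i = (x+y)$j" by simp
  qed
next
  fix c :: real and x assume x: "x \<in> class_const X P"
  show "c *\<^sub>R x \<in> class_const X P"
    unfolding class_const_def supp_on_def mem_Collect_eq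
  proof (intro conjI allI ballI impI)
    fix i assume "i \<notin> X" then show "(c *\<^sub>R x)$i = 0" using x by (simp add: class_const_def supp_on_def)
  next
    fix Q i j assume "Q \<in> P" "i \<in> Q" "j \<in> Q"
    then have "x$i = x$j" using x unfolding class_const_def by blast
    then show "(c *\<^sub>R x)$i = (c *\<^sub>R x)$j" by simp
  qed
qed

lemma orth_compl_eq: "orth_compl X S = {y \<in> supp_on X. \<forall>x \<in> S. orthogonal x y}"
  unfolding orth_compl_def orthogonal_def by (auto simp: inner_commute)

lemma subspace_orth_compl: "subspace (orth_compl X S)"
  unfolding subspace_def orth_compl_def supp_on_def by (auto simp: inner_add_left)

lemma subspace_eigensp: "subspace S \<Longrightarrow> subspace (eigensp S M t)"
  unfolding subspace_def eigensp_def
  by (auto simp: matrix_vector_right_distrib scaleR_add_right matrix_vector_mult_scaleR)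

lemma dim_supp_on: "dim (supp_on (X::'a::finite set)) \<le> card X"
proof -
  have "supp_on X \<subseteq> span ((\<lambda>i. axis i (1::real)) ` X)"
  proof
    fix x :: "real^'a" assume x: "x \<in> supp_on X"
    have "x = (\<Sum>i\<in>X. x$i *\<^sub>R axis i 1)"
    unfolding vec_eq_iff
    proof
      fix k
      show "x $ k = (\<Sum>i\<in>X. x$i *\<^sub>R axis i 1) $ k"
        using x by (auto simp: supp_on_def sum_component axis_def if_distrib cong: if_cong)
    qed
    also have "\<dots> \<in> span ((\<lambda>i. axis i (1::real)) ` X)"
      by (intro span_sum span_scale span_base) auto
    finally show "x \<in> span ((\<lambda>i. axis i (1::real)) ` X)" .
  qed
  then have "dim (supp_on X) \<le> card ((\<lambda>i. axis i (1::real)) ` X)"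
    by (intro dim_le_card) auto
  also have "\<dots> \<le> card X" by (rule card_image_le) auto
  finally show ?thesis .
qed

theorem mainTheorem3:
  fixes E :: "'a::finite \<Rightarrow> 'a \<Rightarrow> bool"
    and v k lam mu f g :: nat and r s :: real
    and C :: "'a set" and P :: "'a set set"
    and VV K l1 l2 m n f1 f2 g1 g2 :: nat
  assumes srg: "srg E v k lam mu"
    and prim: "primitive E"
    and specG: "spectrum_on UNIV (adj_mat E UNIV)
                  ({#real k#} + replicate_mset f r + replicate_mset g s)"
    and kr: "real k > r" and rs: "r > s"
    and cocl: "coclique E C"
    and csize: "real (card C) = real v * s / (s - real k)"
    and ddg: "proper_ddg E (- C) P VV K l1 l2 m n"
    and specWp: "spectrum_on (orth_compl (- C) (class_const (- C) P)) (adj_mat E (- C))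
                  (replicate_mset f1 (sqrt (real K - real l1))
                   + replicate_mset f2 (- sqrt (real K - real l1)))"
    and f12: "f1 + f2 = m * (n - 1)"
    and specW1: "spectrum_on (class_const (- C) P \<inter> orth_compl (- C) {ones_on (- C)})
                  (adj_mat E (- C))
                  (replicate_mset g1 (sqrt (real K ^ 2 - real l2 * real VV))
                   + replicate_mset g2 (- sqrt (real K ^ 2 - real l2 * real VV)))"
    and g12: "g1 + g2 = m - 1"
    and specD: "spectrum_on (supp_on (- C)) (adj_mat E (- C))
                  ({#real k + s#}
                   + replicate_mset (nat (int f - int (card C) + 1)) r
                   + replicate_mset (card C - 1) (r + s)
                   + replicate_mset (g - card C) s)"
    and cg: "card C < g"
  shows "\<not> (r = sqrt (real K - real l1)
           \<and> r + s = sqrt (real K ^ 2 - real l2 * real VV)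
           \<and> s = - sqrt (real K ^ 2 - real l2 * real VV)
           \<and> f2 = 0
           \<and> int f1 = int f - int (card C) + 1
           \<and> int g1 = int (card C) - 1
           \<and> int g2 = int g - int (card C))"
  proof
  assume H: "r = sqrt (real K - real l1)
           \<and> r + s = sqrt (real K ^ 2 - real l2 * real VV)
           \<and> s = - sqrt (real K ^ 2 - real l2 * real VV)
           \<and> f2 = 0
           \<and> int f1 = int f - int (card C) + 1
           \<and> int g1 = int (card C) - 1
           \<and> int g2 = int g - int (card C)"
  define X where "X = - C"
  define A where "A = adj_mat E X"
  define W where "W = class_const X P"
  define Wp where "Wp = orth_compl X W"
  define Eg where "Eg = eigensp Wp A r"
  have rpos: "r > 0" using H rs by linarith
  from ddg have dd: "ddg E X P VV K l1 l2 m n" and n1: "n \<noteq> 1"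
    unfolding proper_ddg_def X_def by auto
  from dd have part: "partition_on X P" and cP: "card P = m" and cQ: "\<forall>Q\<in>P. card Q = n"
    and ne: "\<not> (\<forall>x\<in>X. \<forall>y\<in>X. \<not> E x y)"
    unfolding ddg_def by auto
  have Xne: "X \<noteq> {}" using ne by auto
  have UP: "\<Union>P = X" using part by (simp add: partition_on_def)
  have Pne: "{} \<notin> P" using part by (simp add: partition_on_def)
  have disj: "disjoint P" using part by (simp add: partition_on_def)
  have finP: "finite P" by (rule finite_subset[of _ "Pow UNIV"]) auto
  have cardX: "card X = m * n"
  proof -
    have "card (\<Union>P) = sum card P"
      by (rule card_Union_disjoint) (use disj in \<open>auto simp: disjoint_def pairwise_def disjnt_def\<close>)
    also have "\<dots> = m * n" using cQ cP by simp
    finally show ?thesis using UP by simp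
  qed
  have f1eq: "f1 = m * (n - 1)" using f12 H by simp
  define ind where "ind Q = (\<chi> k. if k \<in> Q then (1::real) else 0)" for Q :: "'a set"
  have indW: "ind ` P \<subseteq> W"
  proof
    fix x assume "x \<in> ind ` P"
    then obtain Q where Q: "Q \<in> P" "x = ind Q" by auto
    have QX: "Q \<subseteq> X" using Q UP by auto
    show "x \<in> W" unfolding W_def class_const_def supp_on_def
    proof (intro CollectI conjI allI ballI impI)
      fix i assume "i \<notin> X" then show "x $ i = 0" using QX Q by (auto simp: ind_def)
    next
      fix Q' i j assume "Q' \<in> P" "i \<in> Q'" "j \<in> Q'"
      then have "i \<in> Q \<longleftrightarrow> j \<in> Q" using disj Q(1)
        by (cases "Q = Q'") (auto dest: disjointD[OF disj])
      then show "x $ i = x $ j" using Q by (simp add: ind_def)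
    qed
  qed
  have indinj: "inj_on ind P"
  proof
    fix Q Q' assume QQ: "Q \<in> P" "Q' \<in> P" "ind Q = ind Q'"
    then have "\<forall>k. (k \<in> Q) = (k \<in> Q')" by (auto simp: ind_def vec_eq_iff split: if_splits)
    then show "Q = Q'" by auto
  qed
  have indep: "independent (ind ` P)"
  proof (rule pairwise_orthogonal_independent)
    show "pairwise orthogonal (ind ` P)"
    proof (clarsimp simp: pairwise_def orthogonal_def)
      fix Q Q' assume QQ: "Q \<in> P" "Q' \<in> P" "ind Q \<noteq> ind Q'"
      then have "Q \<noteq> Q'" by auto
      then have "Q \<inter> Q' = {}" using disj QQ by (meson disjointD)
      then show "ind Q \<bullet> ind Q' = 0"
        unfolding inner_vec_def ind_def by (auto intro!: sum.neutral)
    qed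
    show "0 \<notin> ind ` P"
    proof
      assume "0 \<in> ind ` P"
      then obtain Q where Q0: "Q \<in> P" "ind Q = 0" by auto
      then have "Q \<noteq> {}" using Pne by auto
      then obtain q where "q \<in> Q" by auto
      then have "ind Q $ q = 1" by (simp add: ind_def)
      then show False using Q0 by simp
    qed
  qed
  have dimW: "m \<le> dim W"
  proof -
    have "card (ind ` P) \<le> dim W" by (rule independent_card_le_dim[OF indW indep])
    then show ?thesis using card_image[OF indinj] cP by simp
  qed
  have WS: "W \<subseteq> supp_on X" unfolding W_def class_const_def by auto
  have dsum: "dim Wp + dim W = dim (supp_on X)"
    unfolding Wp_def orth_compl_eq
    by (rule dim_subspace_orthogonal_to_vectors[OF _ subspace_supp_on WS])
       (simp add: W_def subspace_class_const)
  have dimWp: "dim Wp \<le> m * (n - 1)"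
    using dsum dimW dim_supp_on[of X] cardX by (simp add: diff_mult_distrib2)
  have cnt: "count (replicate_mset f1 (sqrt (real K - real l1))
                   + replicate_mset f2 (- sqrt (real K - real l1))) r = f1"
    using H by simp
  have dimEg: "dim Eg = f1"
    using specWp cnt unfolding spectrum_on_def Eg_def Wp_def W_def A_def X_def by metis
  have EgWp: "Eg \<subseteq> Wp" unfolding Eg_def eigensp_def by auto
  have "span Eg = span Wp"
    by (rule dim_eq_span[OF EgWp]) (use dimWp dimEg f1eq in simp)
  then have WpEg: "Wp \<subseteq> Eg"
    using subspace_eigensp[OF subspace_orth_compl] subspace_orth_compl
    by (metis Eg_def Wp_def span_eq_iff order_refl)
  obtain Q where Q: "Q \<in> P" using Xne UP by auto
  have "card Q = n" using cQ Q by simp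
  moreover have "Q \<noteq> {}" using Q Pne by auto
  moreover have "finite Q" by simp
  ultimately have "card Q \<noteq> 0" "card Q \<noteq> 1" using n1 by auto
  then have "\<not> card Q \<le> Suc 0" by linarith
  then have "\<not> (\<forall>x\<in>Q. \<forall>y\<in>Q. x = y)" using card_le_Suc0_iff_eq[of Q] by auto
  then obtain i j where ij: "i \<in> Q" "j \<in> Q" "i \<noteq> j" by blast
  have QX: "Q \<subseteq> X" using Q UP by auto
  define x where "x = axis i (1::real) - axis j 1"
  have "x \<in> Wp" unfolding Wp_def orth_compl_def
  proof (intro CollectI conjI ballI)
    show "x \<in> supp_on X" using QX ij by (auto simp: supp_on_def x_def axis_def)
  next
    fix w assume "w \<in> W"
    then have "w $ i = w $ j" using Q ij unfolding W_def class_const_def by blast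
    then show "inner x w = 0" by (simp add: x_def inner_diff_left inner_axis')
  qed
  with WpEg have "A *v x = r *\<^sub>R x" unfolding Eg_def eigensp_def by auto
  then have eqi: "(A *v x) $ i = r" using ij by (simp add: x_def axis_def)
  have gr: "is_graph E" using srg by (simp add: srg_def)
  have "(A *v x) $ i = (\<Sum>k\<in>UNIV. A$i$k * ((if k = i then 1 else 0) - (if k = j then 1 else 0)))"
    by (simp add: matrix_vector_mult_def x_def axis_def)
  also have "\<dots> = (\<Sum>k\<in>UNIV. A$i$k * (if k = i then 1 else 0))
      - (\<Sum>k\<in>UNIV. A$i$k * (if k = j then 1 else 0))"
    by (simp only: right_diff_distrib sum_subtractf)
  also have "\<dots> = A$i$i - A$i$j"
  proof -
    have s1: "(\<Sum>k\<in>UNIV. A$i$k * (if k = a then 1 else 0)) = A$i$a" for a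
    proof -
      have "(\<Sum>k\<in>UNIV. A$i$k * (if k = a then 1 else 0)) = (\<Sum>k\<in>UNIV. if k = a then A$i$k else 0)"
        by (rule sum.cong) auto
      also have "\<dots> = A$i$a" by simp
      finally show ?thesis .
    qed
    show ?thesis by (simp only: s1)
  qed
  also have "\<dots> \<le> 0" using gr by (simp add: A_def adj_mat_def is_graph_def)
  finally show False using eqi rpos by simp
qed

end
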